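(* Consider a wireless network in $\mathbb{R}^2$ in which a typical actuator is located at the origin and is served by a typical controller at fixed distance $r_0>0$. The other controllers form a homogeneous Poisson point process $\Phi$ of density $\lambda>0$. In block $k$, with $P_{{\rm O}_{k-1}}\in[0,1]$ and access probabilities $\delta_{{\rm B}_k},\delta_{{\rm S}_k},\delta_{{\rm C}_k}\in[0,1]$, each controller of $\Phi$ is, independently of the others, in one of three access modes: - block-access mode $\Phi_{\rm B}$, with probability $(1-P_{{\rm O}_{k-1}})\delta_{{\rm B}_k}$, transmitting in every slot of block $k$; - slot-access mode $\Phi_{\rm S}$, with probability $(1-P_{{\rm O}_{k-1}})(1-\delta_{{\rm B}_k})$, transmitting in each slot independently with probability $\delta_{{\rm S}_k}$; - post-controllability mode $\Phi_{\rm C}$, with probability $P_{{\rm O}_{k-1}}$, transmitting in each slot independently with probability $\delta_{{\rm C}_k}$. Define $$\lambda_{{\rm B}_k}=(1-P_{{\rm O}_{k-1}})\delta_{{\rm B}_k}\lambda,\qquad \lambda_{{\rm S}_k}=(1-P_{{\rm O}_{k-1}})(1-\delta_{{\rm B}_k})\delta_{{\rm S}_k}\lambda,\qquad \lambda_{{\rm C}_k}=P_{{\rm O}_{k-1}}\delta_{{\rm C}_k}\lambda,$$ and set $\lambda_{\rm eff}=\lambda_{{\rm B}_k}+\lambda_{{\rm S}_k}+\lambda_{{\rm C}_k}$. In a slot $t$ of block $k$, let $\mathbb{I}_j(S_t)\in\{0,1\}$ indicate that controller $j$ transmits. The SINR at the typical actuator is $$\Upsilon(t)=\frac{\mathbb{I}_0(S_t)\,\xi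 |h_0(t)|^2 r_0^{-\alpha}}{N_o+\sum_{j\in\Phi\setminus\{0\}}\mathbb{I}_j(S_t)\,\xi|h_j(t)|^2 r_j^{-\alpha}},$$ where: - $\xi>0$ is the transmit power and $N_o\ge 0$ the noise power; - $\alpha>0$ is the path-loss exponent; - $r_j$ is the distance from controller $j$ to the origin; - the fading powers $|h_j(t)|^2$ are i.i.d. exponential with mean $1$, independent of everything else. Let $\gamma>0$. Then, for any access mode $\phi\in\{\Phi_{\rm B},\Phi_{\rm S},\Phi_{\rm C}\}$ of the typical controller, the conditional success probability $\varrho_k=\mathbb{P}(\Upsilon(t)>\gamma\mid \mathbb{I}_0(S_t)=1,\phi)$ does not depend on $\phi$, and $$\varrho_k=\exp\Big(-\frac{\gamma N_o}{\xi r_0^{-\alpha}}\Big)\exp\Big(-2\pi\lambda_{\rm eff}\int_0^\infty \frac{\gamma r^{-\alpha}}{r_0^{-\alpha}+\gamma r^{-\alpha}}\,r\,dr\Big).$$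
   Context: The typical controller–actuator pair is placed at the origin by Slivnyak's theorem, so the remaining controllers still form a homogeneous PPP of density $\lambda$. The quantity $P_{{\rm O}_{k-1}}$ is the probability that a controller has achieved block controllability by the end of block $k-1$. It serves here only as a given number in $[0,1]$ determining the fractions of controllers in each access mode. *)

theory Defs
  imports "HOL-Probability.Probability"
begin

datatype access_mode = BlockAccess | SlotAccess | PostCtrl

definition mode_pmf :: "real \<Rightarrow> real \<Rightarrow> access_mode pmf" where
  "mode_pmf PO dB =
     bind_pmf (bernoulli_pmf PO) (\<lambda>c. if c then return_pmf PostCtrl
        else map_pmf (\<lambda>b. if b then BlockAccess else SlotAccess) (bernoulli_pmf dB))"

definition tx_pmf :: "real \<Rightarrow> real \<Rightarrow> access_mode \<Rightarrow> bool pmf" where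
  "tx_pmf dS dC m = (case m of BlockAccess \<Rightarrow> return_pmf True
                              | SlotAccess \<Rightarrow> bernoulli_pmf dS
                              | PostCtrl \<Rightarrow> bernoulli_pmf dC)"

definition mark_pmf :: "real \<Rightarrow> real \<Rightarrow> real \<Rightarrow> real \<Rightarrow> (access_mode \<times> bool) pmf" where
  "mark_pmf PO dB dS dC = bind_pmf (mode_pmf PO dB) (\<lambda>m. map_pmf (\<lambda>b. (m, b)) (tx_pmf dS dC m))"

text \<open>Fading power |h|^2: exponential with mean 1.\<close>
definition fading_measure :: "real measure" where
  "fading_measure = density lborel (exponential_density 1)"

text \<open>Mark of a controller in slot t: ((access mode, transmits in slot t), fading power),
  with fading independent of (mode, transmission).\<close>
definition mark_measure :: "real \<Rightarrow> real \<Rightarrow> real \<Rightarrow> real \<Rightarrow> ((access_mode \<times> bool) \<times> real) measure" where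
  "mark_measure PO dB dS dC = measure_pmf (mark_pmf PO dB dS dC) \<Otimes>\<^sub>M fading_measure"

type_synonym mpoint = "(real \<times> real) \<times> ((access_mode \<times> bool) \<times> real)"

definition intensity :: "real \<Rightarrow> real \<Rightarrow> real \<Rightarrow> real \<Rightarrow> real \<Rightarrow> mpoint measure" where
  "intensity lam PO dB dS dC =
     density (lborel \<Otimes>\<^sub>M mark_measure PO dB dS dC) (\<lambda>_. ennreal lam)"

text \<open>Poisson point process with intensity measure mu, realised as a random (simple) set of points.\<close>
definition poisson_process :: "'w measure \<Rightarrow> 'p measure \<Rightarrow> ('w \<Rightarrow> 'p set) \<Rightarrow> bool" where
  "poisson_process M mu P \<longleftrightarrow> prob_space M \<and>
     (\<forall>\<omega>\<in>space M. P \<omega> \<subseteq> space mu) \<and>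
     (\<forall>A\<in>sets mu. emeasure mu A < \<infinity> \<longrightarrow>
        (AE \<omega> in M. finite (P \<omega> \<inter> A)) \<and>
        (\<lambda>\<omega>. card (P \<omega> \<inter> A)) \<in> measurable M (count_space UNIV) \<and>
        (\<forall>n. measure M {\<omega>\<in>space M. card (P \<omega> \<inter> A) = n} =
              exp (- enn2real (emeasure mu A)) * enn2real (emeasure mu A) ^ n / fact n)) \<and>
     (\<forall>(I :: nat set) (A :: nat \<Rightarrow> 'p set). finite I \<longrightarrow>
        (\<forall>i\<in>I. A i \<in> sets mu \<and> emeasure mu (A i) < \<infinity>) \<longrightarrow> disjoint_family_on A I \<longrightarrow>
        prob_space.indep_vars M (\<lambda>_. count_space UNIV) (\<lambda>i \<omega>. card (P \<omega> \<inter> A i)) I)"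

definition interference :: "real \<Rightarrow> real \<Rightarrow> mpoint set \<Rightarrow> ennreal" where
  "interference xi alpha S =
     (SUP F\<in>{F. finite F \<and> F \<subseteq> S}. \<Sum>p\<in>F.
        (case p of (x, ((m, b), h)) \<Rightarrow> if b then ennreal (xi * h * norm x powr (- alpha)) else 0))"

definition lamB :: "real \<Rightarrow> real \<Rightarrow> real \<Rightarrow> real" where
  "lamB lam PO dB = (1 - PO) * dB * lam"
definition lamS :: "real \<Rightarrow> real \<Rightarrow> real \<Rightarrow> real \<Rightarrow> real" where
  "lamS lam PO dB dS = (1 - PO) * (1 - dB) * dS * lam"
definition lamC :: "real \<Rightarrow> real \<Rightarrow> real \<Rightarrow> real" where
  "lamC lam PO dC = PO * dC * lam"
definition lam_eff :: "real \<Rightarrow> real \<Rightarrow> real \<Rightarrow> real \<Rightarrow> real \<Rightarrow> real" where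
  "lam_eff lam PO dB dS dC = lamB lam PO dB + lamS lam PO dB dS + lamC lam PO dC"

end

theory Submission
  imports Defs
begin

lemma unit_ball_vol_two: "unit_ball_vol 2 = pi"
  using unit_ball_vol_numeral(1)[of Num.One] by simp

lemma emeasure_norm_le:
  "emeasure (lborel :: (real \<times> real) measure) {x. norm x \<le> a} = ennreal (if a < 0 then 0 else pi * (a*a))"
proof (cases "a < 0")
  case True
  have e: "{x::real\<times>real. norm x \<le> a} = {}"
  proof (intro equals0I)
    fix x assume "x \<in> {x::real\<times>real. norm x \<le> a}"
    then have "norm x \<le> a" by simp
    with norm_ge_zero[of x] True show False by linarith
  qed
  show ?thesis using True by (simp only: e emeasure_empty if_True ennreal_0)
next
  case False
  have "{x::real\<times>real. norm x \<le> a} = cball 0 a" by (auto simp: cball_def dist_norm)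
  moreover have "emeasure lborel (cball (0::real\<times>real) a) = ennreal (unit_ball_vol (DIM(real\<times>real)) * a ^ DIM(real\<times>real))"
    using False by (intro emeasure_cball) simp
  ultimately have "emeasure (lborel :: (real \<times> real) measure) {x. norm x \<le> a} = ennreal (pi * (a * a))"
    by (simp add: unit_ball_vol_two)
  then show ?thesis using False by simp
qed

lemma polar_distr:
  "distr (lborel :: (real \<times> real) measure) borel norm = density lborel (\<lambda>r. ennreal (2*pi*r) * indicator {0<..} r)"
proof (rule measure_eqI_generator_eq_countable[where E="range (\<lambda>a. {..a::real})" and \<Omega>=UNIV
      and A="range (\<lambda>n::nat. {..real n})"])
  show "Int_stable (range (\<lambda>a. {..a::real}))" by (auto simp: Int_stable_def)
  show "sets (distr lborel borel norm) = sigma_sets UNIV (range atMost)"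
    by (simp add: borel_eq_atMost[where 'a=real])
  show "sets (density lborel (\<lambda>r. ennreal (2*pi*r) * indicator {0<..} r)) = sigma_sets UNIV (range atMost)"
    by (simp add: borel_eq_atMost[where 'a=real])
  have eq: "emeasure (distr (lborel :: (real \<times> real) measure) borel norm) {..a} = ennreal (if a < 0 then 0 else pi * (a*a))" for a :: real
    by (subst emeasure_distr) (auto simp: emeasure_norm_le[symmetric] vimage_def)
  have eq2: "emeasure (density lborel (\<lambda>r. ennreal (2*pi*r) * indicator {0<..} r)) {..a}
       = ennreal (if a < 0 then 0 else pi * (a*a))" for a :: real
  proof -
    have "emeasure (density lborel (\<lambda>r. ennreal (2*pi*r) * indicator {0<..} r)) {..a}
        = (\<integral>\<^sup>+r. ennreal (2*pi*r) * indicator {0<..} r * indicator {..a} r \<partial>lborel)"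
      by (subst emeasure_density) auto
    also have "\<dots> = (\<integral>\<^sup>+r. ennreal (2*pi*r) * indicator {0..a} r \<partial>lborel)"
      by (intro nn_integral_cong) (auto split: split_indicator)
    also have "\<dots> = ennreal (if a < 0 then 0 else pi * (a*a))"
    proof (cases "a < 0")
      case True then show ?thesis by simp
    next
      case False
      have "(\<integral>\<^sup>+r. ennreal (2*pi*r) * indicator {0..a} r \<partial>lborel) = pi * (a*a) - pi * (0*0)"
        by (rule nn_integral_FTC_Icc[where F="\<lambda>r. pi * (r*r)"]) (use False in \<open>auto intro!: derivative_eq_intros\<close>)
      then show ?thesis using False by simp
    qed
    finally show ?thesis .
  qed
  show "emeasure (distr (lborel :: (real \<times> real) measure) borel norm) X = emeasure (density lborel (\<lambda>r. ennreal (2*pi*r) * indicator {0<..} r)) X"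
    if "X \<in> range atMost" for X
  proof -
    from that obtain a where "X = {..a}" by auto
    then show ?thesis by (simp only: eq eq2)
  qed
  show "range (\<lambda>n::nat. {..real n}) \<subseteq> range atMost" by (intro image_subsetI rangeI)
  show "\<Union> (range (\<lambda>n::nat. {..real n})) = UNIV"
  proof (intro set_eqI iffI)
    fix x :: real
    obtain n :: nat where "x \<le> real n" using real_arch_simple by blast
    then show "x \<in> \<Union> (range (\<lambda>n::nat. {..real n}))" by blast
  qed simp
  show "countable (range (\<lambda>n::nat. {..real n}))" by simp
  show "emeasure (distr (lborel :: (real \<times> real) measure) borel norm) X \<noteq> \<infinity>"
    if "X \<in> range (\<lambda>n::nat. {..real n})" for X
  proof -
    from that obtain n :: nat where "X = {..real n}" by auto
    then show ?thesis by (simp only: eq infinity_ennreal_def ennreal_neq_top not_False_eq_True)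
  qed
  show "range (\<lambda>a. {..a::real}) \<subseteq> Pow UNIV" by simp
qed

definition Ssum :: "('p \<Rightarrow> ennreal) \<Rightarrow> 'p set \<Rightarrow> ennreal" where
  "Ssum g S = (SUP F\<in>{F. finite F \<and> F \<subseteq> S}. \<Sum>p\<in>F. g p)"

definition ee :: "ennreal \<Rightarrow> real" where
  "ee x = (if x = \<infinity> then 0 else exp (- enn2real x))"

lemma ee_nonneg: "0 \<le> ee x"
  by (auto simp: ee_def)

lemma ee_le1: "ee x \<le> 1"
  by (auto simp: ee_def enn2real_nonneg)

lemma ee_ennreal: "0 \<le> x \<Longrightarrow> ee (ennreal x) = exp (- x)"
  by (simp add: ee_def)

lemma borel_measurable_ee[measurable]: "ee \<in> borel_measurable borel"
  unfolding ee_def by measurable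

lemma ee_tendsto:
  fixes x :: "nat \<Rightarrow> ennreal"
  assumes "x \<longlonglongrightarrow> y"
  shows "(\<lambda>n. ee (x n)) \<longlonglongrightarrow> ee y"
proof (cases "y = \<infinity>")
  case False
  have ev: "eventually (\<lambda>n. x n < \<infinity>) sequentially"
    using order_tendstoD(2)[OF assms] False by (simp add: top.not_eq_extremum)
  have yy: "ennreal (enn2real y) = y" using False by (simp add: less_top)
  have "x \<longlonglongrightarrow> ennreal (enn2real y)" using assms yy by simp
  then have "(\<lambda>n. exp (- enn2real (x n))) \<longlonglongrightarrow> exp (- enn2real y)"
    by (intro tendsto_intros tendsto_enn2real) simp_all
  moreover have "eventually (\<lambda>n. exp (- enn2real (x n)) = ee (x n)) sequentially"
    using ev by (auto elim!: eventually_mono simp: ee_def)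
  ultimately have "(\<lambda>n. ee (x n)) \<longlonglongrightarrow> exp (- enn2real y)"
    by (rule Lim_transform_eventually)
  then show ?thesis using False by (simp add: ee_def)
next
  case True
  show ?thesis unfolding True
  proof (rule LIMSEQ_I)
    fix e :: real assume e: "0 < e"
    define B where "B = max 0 (- ln e)"
    have "eventually (\<lambda>n. ennreal B < x n) sequentially"
      using order_tendstoD(1)[OF assms] True by simp
    then obtain N where N: "\<And>n. n \<ge> N \<Longrightarrow> ennreal B < x n" by (auto simp: eventually_sequentially)
    show "\<exists>no. \<forall>n\<ge>no. norm (ee (x n) - ee \<infinity>) < e"
    proof (intro exI allI impI)
      fix n assume "n \<ge> N"
      then have lt: "ennreal B < x n" by (rule N)
      show "norm (ee (x n) - ee \<infinity>) < e"
      proof (cases "x n = \<infinity>")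
        case True then show ?thesis using e by (simp add: ee_def)
      next
        case False
        then have "x n = ennreal (enn2real (x n))" by (simp add: less_top)
        with lt have "B < enn2real (x n)"
          by (metis B_def ennreal_less_iff max.cobounded1)
        then have "exp (- enn2real (x n)) < exp (- B)" by simp
        also have "exp (- B) \<le> exp (- (- ln e))" unfolding B_def by simp
        also have "\<dots> = e" using e by simp
        finally show ?thesis using False by (simp add: ee_def)
      qed
    qed
  qed
qed

lemma poisson_pgf:
  fixes N :: "'w \<Rightarrow> nat"
  assumes M: "prob_space M" and N: "N \<in> measurable M (count_space UNIV)"
    and dist: "\<And>n. measure M {\<omega>\<in>space M. N \<omega> = n} = exp (- m) * m ^ n / fact n"
    and m: "0 \<le> m" and c: "0 \<le> c"
  shows "(\<integral>\<^sup>+\<omega>. ennreal (exp (- (c * real (N \<omega>)))) \<partial>M) = ennreal (exp (- (m * (1 - exp (- c)))))"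
proof -
  interpret prob_space M by (rule M)
  have [measurable]: "{\<omega>\<in>space M. N \<omega> = n} \<in> sets M" for n
    using N by measurable
  have pw: "ennreal (exp (- (c * real (N \<omega>))))
      = (\<Sum>n. ennreal (exp (- (c * real n))) * indicator {\<omega>\<in>space M. N \<omega> = n} \<omega>)"
    if "\<omega> \<in> space M" for \<omega>
  proof -
    have "(\<Sum>n. ennreal (exp (- (c * real n))) * indicator {\<omega>\<in>space M. N \<omega> = n} \<omega>)
        = (\<Sum>n\<in>{N \<omega>}. ennreal (exp (- (c * real n))) * indicator {\<omega>\<in>space M. N \<omega> = n} \<omega>)"
      by (rule suminf_finite) (auto split: split_indicator)
    then show ?thesis using that by simp
  qed
  have S: "(\<lambda>n. exp (- (c * real n)) * (exp (- m) * m ^ n / fact n)) sums (exp (- m) * exp (m * exp (- c)))"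
  proof -
    have "(\<lambda>n. exp (- m) * ((m * exp (- c)) ^ n /\<^sub>R fact n)) sums (exp (- m) * exp (m * exp (- c)))"
      by (intro sums_mult exp_converges)
    also have "(\<lambda>n. exp (- m) * ((m * exp (- c)) ^ n /\<^sub>R fact n)) = (\<lambda>n. exp (- (c * real n)) * (exp (- m) * m ^ n / fact n))"
      by (rule ext) (simp add: power_mult_distrib exp_of_nat_mult[symmetric] field_simps)
    finally show ?thesis .
  qed
  have "(\<integral>\<^sup>+\<omega>. ennreal (exp (- (c * real (N \<omega>)))) \<partial>M)
      = (\<integral>\<^sup>+\<omega>. (\<Sum>n. ennreal (exp (- (c * real n))) * indicator {\<omega>\<in>space M. N \<omega> = n} \<omega>) \<partial>M)"
    by (intro nn_integral_cong pw)
  also have "\<dots> = (\<Sum>n. \<integral>\<^sup>+\<omega>. ennreal (exp (- (c * real n))) * indicator {\<omega>\<in>space M. N \<omega> = n} \<omega> \<partial>M)"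
    by (intro nn_integral_suminf) measurable
  also have "\<dots> = (\<Sum>n. ennreal (exp (- (c * real n)) * (exp (- m) * m ^ n / fact n)))"
    by (intro suminf_cong) (simp add: nn_integral_cmult_indicator emeasure_eq_measure dist m flip: ennreal_mult)
  also have "\<dots> = ennreal (exp (- m) * exp (m * exp (- c)))"
  proof -
    have "(\<Sum>n. ennreal (exp (- (c * real n)) * (exp (- m) * m ^ n / fact n))) = ennreal (\<Sum>n. exp (- (c * real n)) * (exp (- m) * m ^ n / fact n))"
      by (rule suminf_ennreal2) (use m in simp, rule sums_summable[OF S])
    also have "(\<Sum>n. exp (- (c * real n)) * (exp (- m) * m ^ n / fact n)) = exp (- m) * exp (m * exp (- c))"
      by (rule sums_unique[OF S, symmetric])
    finally show ?thesis .
  qed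
  finally have F: "(\<integral>\<^sup>+\<omega>. ennreal (exp (- (c * real (N \<omega>)))) \<partial>M) = ennreal (exp (- m) * exp (m * exp (- c)))" .
  have G: "exp (- m) * exp (m * exp (- c)) = exp (- (m * (1 - exp (- c))))"
    by (simp add: exp_add[symmetric] algebra_simps)
  show ?thesis by (simp only: F G)
qed

lemma pp_simple:
  fixes M :: "'w measure" and mu :: "'p measure" and P :: "'w \<Rightarrow> 'p set"
  assumes pp: "poisson_process M mu P" and I: "finite (I::nat set)"
    and A: "\<And>i. i \<in> I \<Longrightarrow> A i \<in> sets mu" "\<And>i. i \<in> I \<Longrightarrow> emeasure mu (A i) < \<infinity>"
    and disj: "disjoint_family_on A I" and c: "\<And>i. i \<in> I \<Longrightarrow> 0 \<le> c i"
  shows "(\<integral>\<^sup>+\<omega>. ennreal (exp (- (\<Sum>i\<in>I. c i * real (card (P \<omega> \<inter> A i))))) \<partial>M)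
       = ennreal (exp (- (\<Sum>i\<in>I. enn2real (emeasure mu (A i)) * (1 - exp (- c i)))))"
proof -
  note ppd = pp[unfolded poisson_process_def]
  have M: "prob_space M" using ppd by (rule conjunct1)
  interpret prob_space M by (rule M)
  have pois: "\<And>B. B \<in> sets mu \<Longrightarrow> emeasure mu B < \<infinity> \<Longrightarrow>
        (\<lambda>\<omega>. card (P \<omega> \<inter> B)) \<in> measurable M (count_space UNIV) \<and>
        (\<forall>n. measure M {\<omega>\<in>space M. card (P \<omega> \<inter> B) = n} =
              exp (- enn2real (emeasure mu B)) * enn2real (emeasure mu B) ^ n / fact n)"
  proof -
    fix B assume B: "B \<in> sets mu" "emeasure mu B < \<infinity>"
    note h = mp[OF bspec[OF ppd[THEN conjunct2, THEN conjunct2, THEN conjunct1] B(1)] B(2)]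
    from h[THEN conjunct2]
    show "(\<lambda>\<omega>. card (P \<omega> \<inter> B)) \<in> measurable M (count_space UNIV) \<and>
        (\<forall>n. measure M {\<omega>\<in>space M. card (P \<omega> \<inter> B) = n} =
              exp (- enn2real (emeasure mu B)) * enn2real (emeasure mu B) ^ n / fact n)" .
  qed
  have ind: "indep_vars (\<lambda>_. count_space UNIV) (\<lambda>i \<omega>. card (P \<omega> \<inter> A i)) I"
  proof -
    have "\<forall>(I :: nat set) (A :: nat \<Rightarrow> 'p set). finite I \<longrightarrow>
        (\<forall>i\<in>I. A i \<in> sets mu \<and> emeasure mu (A i) < \<infinity>) \<longrightarrow> disjoint_family_on A I \<longrightarrow>
        prob_space.indep_vars M (\<lambda>_. count_space UNIV) (\<lambda>i \<omega>. card (P \<omega> \<inter> A i)) I"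
      using ppd[THEN conjunct2, THEN conjunct2, THEN conjunct2] .
    then have "finite I \<longrightarrow>
        (\<forall>i\<in>I. A i \<in> sets mu \<and> emeasure mu (A i) < \<infinity>) \<longrightarrow> disjoint_family_on A I \<longrightarrow>
        prob_space.indep_vars M (\<lambda>_. count_space UNIV) (\<lambda>i \<omega>. card (P \<omega> \<inter> A i)) I"
      by (elim allE)
    moreover have "\<forall>i\<in>I. A i \<in> sets mu \<and> emeasure mu (A i) < \<infinity>" using A by simp
    ultimately show ?thesis using I disj by simp
  qed
  have "(\<integral>\<^sup>+\<omega>. ennreal (exp (- (\<Sum>i\<in>I. c i * real (card (P \<omega> \<inter> A i))))) \<partial>M)
      = (\<integral>\<^sup>+\<omega>. (\<Prod>i\<in>I. ennreal (exp (- (c i * real (card (P \<omega> \<inter> A i)))))) \<partial>M)"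
    by (intro nn_integral_cong) (simp add: prod_ennreal exp_sum I sum_negf[symmetric])
  also have "\<dots> = (\<Prod>i\<in>I. \<integral>\<^sup>+\<omega>. ennreal (exp (- (c i * real (card (P \<omega> \<inter> A i))))) \<partial>M)"
    by (intro indep_vars_nn_integral I indep_vars_compose2[OF ind]) auto
  also have "\<dots> = (\<Prod>i\<in>I. ennreal (exp (- (enn2real (emeasure mu (A i)) * (1 - exp (- c i))))))"
  proof (intro prod.cong refl)
    fix i assume i: "i \<in> I"
    from pois[OF A(1)[OF i] A(2)[OF i]] show "(\<integral>\<^sup>+\<omega>. ennreal (exp (- (c i * real (card (P \<omega> \<inter> A i))))) \<partial>M)
        = ennreal (exp (- (enn2real (emeasure mu (A i)) * (1 - exp (- c i)))))"
      by (intro poisson_pgf M c i) (auto simp: enn2real_nonneg)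
  qed
  also have "\<dots> = ennreal (exp (- (\<Sum>i\<in>I. enn2real (emeasure mu (A i)) * (1 - exp (- c i)))))"
    by (simp add: prod_ennreal exp_sum I sum_negf[symmetric])
  finally show ?thesis .
qed

lemma Ssum_finite: "finite S \<Longrightarrow> Ssum g S = sum g S"
  unfolding Ssum_def
proof (rule antisym)
  assume S: "finite S"
  show "(SUP F\<in>{F. finite F \<and> F \<subseteq> S}. sum g F) \<le> sum g S"
    by (rule SUP_least) (use S in \<open>auto intro: sum_mono2\<close>)
  show "sum g S \<le> (SUP F\<in>{F. finite F \<and> F \<subseteq> S}. sum g F)"
    by (rule SUP_upper) (use S in auto)
qed

lemma Ssum_supp:
  assumes "\<And>p. p \<notin> B \<Longrightarrow> g p = 0"
  shows "Ssum g S = Ssum g (S \<inter> B)"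
  unfolding Ssum_def
proof (rule antisym)
  show "(SUP F\<in>{F. finite F \<and> F \<subseteq> S}. sum g F) \<le> (SUP F\<in>{F. finite F \<and> F \<subseteq> S \<inter> B}. sum g F)"
  proof (rule SUP_least)
    fix F assume F: "F \<in> {F. finite F \<and> F \<subseteq> S}"
    have "sum g F = sum g (F \<inter> B)"
      using F assms by (intro sum.mono_neutral_right) auto
    also have "\<dots> \<le> (SUP F\<in>{F. finite F \<and> F \<subseteq> S \<inter> B}. sum g F)"
      by (rule SUP_upper) (use F in auto)
    finally show "sum g F \<le> (SUP F\<in>{F. finite F \<and> F \<subseteq> S \<inter> B}. sum g F)" .
  qed
  show "(SUP F\<in>{F. finite F \<and> F \<subseteq> S \<inter> B}. sum g F) \<le> (SUP F\<in>{F. finite F \<and> F \<subseteq> S}. sum g F)"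
    by (rule SUP_subset_mono) auto
qed

lemma Ssum_mono: "(\<And>p. g p \<le> h p) \<Longrightarrow> Ssum g S \<le> Ssum h S"
  unfolding Ssum_def by (intro SUP_mono) (auto intro!: sum_mono)

lemma Ssum_SUP:
  fixes g :: "nat \<Rightarrow> 'p \<Rightarrow> ennreal"
  assumes "\<And>p. incseq (\<lambda>n. g n p)"
  shows "Ssum (\<lambda>p. SUP n. g n p) S = (SUP n. Ssum (g n) S)"
proof -
  have "Ssum (\<lambda>p. SUP n. g n p) S = (SUP F\<in>{F. finite F \<and> F \<subseteq> S}. SUP n. \<Sum>p\<in>F. g n p)"
    unfolding Ssum_def by (intro SUP_cong refl ennreal_SUP_sum[symmetric] assms)
  also have "\<dots> = (SUP n. SUP F\<in>{F. finite F \<and> F \<subseteq> S}. \<Sum>p\<in>F. g n p)"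
    by (rule SUP_commute)
  finally show ?thesis unfolding Ssum_def .
qed

lemma Ssum_cmult: "Ssum (\<lambda>p. c * g p) S = c * Ssum g S"
  unfolding Ssum_def by (simp add: SUP_mult_left_ennreal sum_distrib_left)

lemma floor_double: "0 \<le> y \<Longrightarrow> 2 * nat \<lfloor>y\<rfloor> \<le> nat \<lfloor>2 * y\<rfloor>"
proof -
  assume y: "0 \<le> y"
  have "2 * \<lfloor>y\<rfloor> \<le> \<lfloor>2 * y\<rfloor>"
    by (simp add: le_floor_iff)
  then show ?thesis using y by (simp add: nat_mult_distrib[symmetric])
qed

lemma pp_facts:
  assumes pp: "poisson_process M mu P" and A: "A \<in> sets mu" "emeasure mu A < \<infinity>"
  shows "AE \<omega> in M. finite (P \<omega> \<inter> A)"
    and "(\<lambda>\<omega>. card (P \<omega> \<inter> A)) \<in> measurable M (count_space UNIV)"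
proof -
  note ppd = pp[unfolded poisson_process_def]
  note h = mp[OF bspec[OF ppd[THEN conjunct2, THEN conjunct2, THEN conjunct1] A(1)] A(2)]
  show "AE \<omega> in M. finite (P \<omega> \<inter> A)" using h by (rule conjunct1)
  show "(\<lambda>\<omega>. card (P \<omega> \<inter> A)) \<in> measurable M (count_space UNIV)" using h[THEN conjunct2] by (rule conjunct1)
qed

lemma pp_laplace:
  fixes M :: "'w measure" and mu :: "'p measure" and P :: "'w \<Rightarrow> 'p set" and g :: "'p \<Rightarrow> real"
    and B :: "nat \<Rightarrow> 'p set"
  assumes pp: "poisson_process M mu P"
    and g[measurable]: "g \<in> borel_measurable mu" and gnn: "\<And>p. 0 \<le> g p"
    and Bs[measurable]: "\<And>n. B n \<in> sets mu" and Bfin: "\<And>n. emeasure mu (B n) < \<infinity>"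
    and Binc: "incseq B" and Bcov: "\<And>p. \<exists>n. p \<in> B n"
    and meas: "(\<lambda>\<omega>. Ssum (\<lambda>p. ennreal (g p)) (P \<omega>)) \<in> borel_measurable M"
  shows "(\<integral>\<omega>. ee (Ssum (\<lambda>p. ennreal (g p)) (P \<omega>)) \<partial>M) = ee (\<integral>\<^sup>+p. ennreal (1 - exp (- g p)) \<partial>mu)"
proof -
  have M: "prob_space M" using pp unfolding poisson_process_def by (rule conjunct1)
  interpret prob_space M by (rule M)
  define J where "J n p = min (n * 2^n) (nat \<lfloor>2^n * g p\<rfloor>)" for n :: nat and p
  define G where "G n p = (if p \<in> B n then real (J n p) / 2^n else 0)" for n p
  define A where "A n j = {p \<in> B n. J n p = j}" for n j :: nat
  define c where "c n j = real j / 2^n" for n j :: nat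
  define I where "I n = {..n * 2^n}" for n :: nat
  have J_meas: "J n \<in> measurable mu (count_space UNIV)" for n
  proof -
    have "(\<lambda>p. \<lfloor>2^n * g p\<rfloor>) \<in> measurable mu (count_space UNIV)"
      by (rule measurable_compose[OF _ measurable_real_floor]) measurable
    then show ?thesis unfolding J_def
      by (rule measurable_compose[where f="\<lambda>p. \<lfloor>2^n * g p\<rfloor>" and g="\<lambda>k. min (n * 2^n) (nat k)"]) simp
  qed
  have Jr_meas[measurable]: "(\<lambda>p. real (J n p)) \<in> borel_measurable mu" for n
    by (rule measurable_compose[OF J_meas]) simp
  have G_meas[measurable]: "G n \<in> borel_measurable mu" for n
    unfolding G_def by measurable
  have A_sets: "A n j \<in> sets mu" for n j
  proof -
    have "A n j = B n \<inter> (J n -` {j} \<inter> space mu)"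
      unfolding A_def using sets.sets_into_space[OF Bs[of n]] by auto
    also have "\<dots> \<in> sets mu" using measurable_sets[OF J_meas, of "{j}"] by simp
    finally show ?thesis .
  qed
  note A_sets[measurable]
  have A_fin: "emeasure mu (A n j) < \<infinity>" for n j
    using emeasure_mono[of "A n j" "B n" mu] Bfin[of n] Bs[of n] unfolding A_def by auto
  have A_disj: "disjoint_family_on (A n) K" for n K
    unfolding disjoint_family_on_def A_def by auto
  have J_le: "J n p \<in> I n" for n p unfolding J_def I_def by simp
  have G_nonneg: "0 \<le> G n p" for n p unfolding G_def by simp
  have G_inc: "G n p \<le> G (Suc n) p" for n p
  proof (cases "p \<in> B n")
    case False then show ?thesis using G_nonneg[of "Suc n" p] by (simp add: G_def)
  next
    case True
    then have pS: "p \<in> B (Suc n)" using incseq_SucD[OF Binc, of n] by auto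
    have fd: "2 * nat \<lfloor>2^n * g p\<rfloor> \<le> nat \<lfloor>2 * (2^n * g p)\<rfloor>"
      by (rule floor_double) (simp add: gnn)
    have "2 * (n * 2^n) \<le> Suc n * 2 ^ Suc n" by simp
    with fd have "2 * J n p \<le> J (Suc n) p"
      unfolding J_def by (simp add: min_def mult.assoc)
    then have "real (2 * J n p) / 2 ^ Suc n \<le> real (J (Suc n) p) / 2 ^ Suc n"
      by (intro divide_right_mono) simp_all
    then show ?thesis using True pS by (simp add: G_def)
  qed
  have G_incseq: "incseq (\<lambda>n. G n p)" for p
    by (rule incseq_SucI) (rule G_inc)
  have G_lim: "(\<lambda>n. G n p) \<longlonglongrightarrow> g p" for p
  proof -
    obtain n0 where n0: "p \<in> B n0" using Bcov by blast
    obtain n1 :: nat where n1: "g p \<le> real n1" using real_arch_simple by blast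
    have ev: "eventually (\<lambda>n. g p - (1/2)^n \<le> G n p \<and> G n p \<le> g p) sequentially"
      unfolding eventually_sequentially
    proof (intro exI allI impI)
      fix n assume n: "max n0 n1 \<le> n"
      then have pn: "p \<in> B n" using monoD[OF Binc, of n0 n] n0 by auto
      have "2^n * g p \<le> 2^n * real n" using n n1 by (intro mult_left_mono) auto
      then have h: "2^n * g p \<le> real (n * 2^n)" by (simp add: mult.commute)
      have "\<lfloor>2^n * g p\<rfloor> \<le> int (n * 2^n)" using floor_mono[OF h] by (simp only: floor_of_nat)
      then have "nat \<lfloor>2^n * g p\<rfloor> \<le> n * 2^n" by (simp add: nat_le_iff)
      then have Jn: "J n p = nat \<lfloor>2^n * g p\<rfloor>" unfolding J_def by (rule min_absorb2)
      have fl0: "0 \<le> \<lfloor>2^n * g p\<rfloor>" using gnn[of p] by simp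
      have Gn: "G n p = real_of_int \<lfloor>2^n * g p\<rfloor> / 2^n"
        using pn fl0 by (simp add: G_def Jn)
      have a: "real_of_int \<lfloor>2^n * g p\<rfloor> \<le> 2^n * g p" by (rule of_int_floor_le)
      have b: "2^n * g p - 1 < real_of_int \<lfloor>2^n * g p\<rfloor>" by linarith
      have "G n p \<le> g p" unfolding Gn using a by (simp add: divide_le_eq mult.commute)
      moreover have "g p - (1/2)^n \<le> G n p"
      proof -
        have "g p - (1/2)^n = (2^n * g p - 1) / 2^n" by (simp add: field_simps power_divide)
        also have "\<dots> \<le> real_of_int \<lfloor>2^n * g p\<rfloor> / 2^n" using b by (intro divide_right_mono) simp_all
        finally show ?thesis unfolding Gn .
      qed
      ultimately show "g p - (1/2)^n \<le> G n p \<and> G n p \<le> g p" by simp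
    qed
    have "(\<lambda>n. g p - (1/2::real)^n) \<longlonglongrightarrow> g p - 0"
      by (intro tendsto_intros LIMSEQ_power_zero) simp
    then have lo: "(\<lambda>n. g p - (1/2::real)^n) \<longlonglongrightarrow> g p" by simp
    show ?thesis
      by (rule tendsto_sandwich[OF _ _ lo tendsto_const]) (use ev in \<open>auto elim: eventually_mono\<close>)
  qed
  have g_SUP: "ennreal (g p) = (SUP n. ennreal (G n p))" for p
  proof -
    have inc: "incseq (\<lambda>n. ennreal (G n p))"
      using G_incseq[of p] unfolding incseq_def by (auto intro: ennreal_leI)
    show ?thesis by (rule LIMSEQ_unique[OF tendsto_ennrealI[OF G_lim] LIMSEQ_SUP[OF inc]])
  qed
  have e_inc: "incseq (\<lambda>n. ennreal (1 - exp (- G n p)))" for p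
    using G_incseq[of p] unfolding incseq_def by (auto intro!: ennreal_leI)
  have e_SUP: "ennreal (1 - exp (- g p)) = (SUP n. ennreal (1 - exp (- G n p)))" for p
  proof -
    have "(\<lambda>n. ennreal (1 - exp (- G n p))) \<longlonglongrightarrow> ennreal (1 - exp (- g p))"
      by (intro tendsto_ennrealI tendsto_intros G_lim)
    then show ?thesis by (rule LIMSEQ_unique[OF _ LIMSEQ_SUP[OF e_inc]])
  qed
  define S where "S n \<omega> = (\<Sum>j\<in>I n. c n j * real (card (P \<omega> \<inter> A n j)))" for n \<omega>
  have card_meas[measurable]: "(\<lambda>\<omega>. real (card (P \<omega> \<inter> A n j))) \<in> borel_measurable M" for n j
    by (rule measurable_compose[OF pp_facts(2)[OF pp A_sets A_fin]]) simp
  have S_meas[measurable]: "S n \<in> borel_measurable M" for n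
    unfolding S_def by measurable
  have S_nonneg: "0 \<le> S n \<omega>" for n \<omega>
    unfolding S_def c_def by (intro sum_nonneg) simp
  have finAE: "AE \<omega> in M. \<forall>n. finite (P \<omega> \<inter> B n)"
    using pp_facts(1)[OF pp Bs Bfin] by (simp add: AE_all_countable)
  have Ssum_G: "Ssum (\<lambda>p. ennreal (G n p)) (P \<omega>) = ennreal (S n \<omega>)"
    if fin: "finite (P \<omega> \<inter> B n)" for n \<omega>
  proof -
    have "Ssum (\<lambda>p. ennreal (G n p)) (P \<omega>) = Ssum (\<lambda>p. ennreal (G n p)) (P \<omega> \<inter> B n)"
      by (rule Ssum_supp) (simp add: G_def)
    also have "\<dots> = (\<Sum>p\<in>P \<omega> \<inter> B n. ennreal (G n p))"
      by (rule Ssum_finite[OF fin])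
    also have "\<dots> = ennreal (\<Sum>p\<in>P \<omega> \<inter> B n. G n p)"
      using G_nonneg by simp
    also have "(\<Sum>p\<in>P \<omega> \<inter> B n. G n p) = (\<Sum>p\<in>P \<omega> \<inter> B n. c n (J n p))"
      by (intro sum.cong refl) (simp add: G_def c_def)
    also have "\<dots> = (\<Sum>j\<in>I n. \<Sum>p\<in>{p. p \<in> P \<omega> \<inter> B n \<and> J n p = j}. c n (J n p))"
      by (rule sum.group[symmetric]) (use fin J_le in \<open>auto simp: I_def\<close>)
    also have "\<dots> = S n \<omega>"
      unfolding S_def
    proof (intro sum.cong refl)
      fix j assume "j \<in> I n"
      have "{p. p \<in> P \<omega> \<inter> B n \<and> J n p = j} = P \<omega> \<inter> A n j" unfolding A_def by auto
      moreover have "(\<Sum>p\<in>P \<omega> \<inter> A n j. c n (J n p)) = (\<Sum>p\<in>P \<omega> \<inter> A n j. c n j)"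
        by (intro sum.cong refl) (auto simp: A_def)
      ultimately show "(\<Sum>p\<in>{p. p \<in> P \<omega> \<inter> B n \<and> J n p = j}. c n (J n p)) = c n j * real (card (P \<omega> \<inter> A n j))"
        by (simp add: mult.commute)
    qed
    finally show ?thesis .
  qed
  have Ssum_lim: "(\<lambda>n. Ssum (\<lambda>p. ennreal (G n p)) T) \<longlonglongrightarrow> Ssum (\<lambda>p. ennreal (g p)) T" for T
  proof -
    have inc: "incseq (\<lambda>n. Ssum (\<lambda>p. ennreal (G n p)) T)"
      unfolding incseq_def by (auto intro!: Ssum_mono ennreal_leI incseq_SucI G_inc incseqD[OF G_incseq])
    have "Ssum (\<lambda>p. ennreal (g p)) T = Ssum (\<lambda>p. SUP n. ennreal (G n p)) T"
      by (simp add: g_SUP[symmetric])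
    also have "\<dots> = (SUP n. Ssum (\<lambda>p. ennreal (G n p)) T)"
      by (rule Ssum_SUP) (use G_incseq in \<open>auto simp: incseq_def intro: ennreal_leI\<close>)
    finally show ?thesis using LIMSEQ_SUP[OF inc] by simp
  qed
  have lhs_lim: "(\<lambda>n. \<integral>\<omega>. exp (- S n \<omega>) \<partial>M) \<longlonglongrightarrow> (\<integral>\<omega>. ee (Ssum (\<lambda>p. ennreal (g p)) (P \<omega>)) \<partial>M)"
  proof (rule integral_dominated_convergence[where w="\<lambda>_. 1"])
    show "(\<lambda>\<omega>. ee (Ssum (\<lambda>p. ennreal (g p)) (P \<omega>))) \<in> borel_measurable M"
      by (rule measurable_compose[OF meas borel_measurable_ee])
    show "(\<lambda>\<omega>. exp (- S n \<omega>)) \<in> borel_measurable M" for n by measurable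
    show "integrable M (\<lambda>_. 1::real)" by simp
    show "AE \<omega> in M. norm (exp (- S n \<omega>)) \<le> 1" for n
      using S_nonneg by simp
    show "AE \<omega> in M. (\<lambda>n. exp (- S n \<omega>)) \<longlonglongrightarrow> ee (Ssum (\<lambda>p. ennreal (g p)) (P \<omega>))"
      using finAE
    proof (eventually_elim)
      case (elim \<omega>)
      have "(\<lambda>n. ee (Ssum (\<lambda>p. ennreal (G n p)) (P \<omega>))) \<longlonglongrightarrow> ee (Ssum (\<lambda>p. ennreal (g p)) (P \<omega>))"
        by (rule ee_tendsto[OF Ssum_lim])
      moreover have "ee (Ssum (\<lambda>p. ennreal (G n p)) (P \<omega>)) = exp (- S n \<omega>)" for n
        using elim by (simp add: Ssum_G ee_ennreal S_nonneg)
      ultimately show ?case by simp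
    qed
  qed
  define K where "K n = (\<integral>\<^sup>+p. ennreal (1 - exp (- G n p)) \<partial>mu)" for n
  define V where "V n = (\<Sum>j\<in>I n. enn2real (emeasure mu (A n j)) * (1 - exp (- c n j)))" for n
  have lhs_val: "(\<integral>\<omega>. exp (- S n \<omega>) \<partial>M) = exp (- V n)" for n
  proof -
    have "ennreal (\<integral>\<omega>. exp (- S n \<omega>) \<partial>M) = (\<integral>\<^sup>+\<omega>. ennreal (exp (- S n \<omega>)) \<partial>M)"
      by (rule nn_integral_eq_integral[symmetric])
         (auto intro!: integrable_const_bound[where B=1] simp: S_nonneg)
    also have "\<dots> = ennreal (exp (- V n))"
      unfolding S_def V_def
      by (rule pp_simple[OF pp]) (auto simp: I_def A_sets A_fin A_disj c_def intro: A_fin[unfolded infinity_ennreal_def])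
    finally show ?thesis by (simp add: ennreal_inj integral_nonneg_AE)
  qed
  have K_val: "K n = ennreal (V n)" for n
  proof -
    have pw: "ennreal (1 - exp (- G n p)) = (\<Sum>j\<in>I n. ennreal (1 - exp (- c n j)) * indicator (A n j) p)" for p
    proof (cases "p \<in> B n")
      case True
      have "(\<Sum>j\<in>I n. ennreal (1 - exp (- c n j)) * indicator (A n j) p)
          = (\<Sum>j\<in>I n. if j = J n p then ennreal (1 - exp (- c n j)) else 0)"
        by (intro sum.cong refl) (use True in \<open>auto simp: A_def split: split_indicator\<close>)
      also have "\<dots> = ennreal (1 - exp (- c n (J n p)))"
        using J_le[of n p] by (simp add: sum.delta I_def)
      finally show ?thesis using True by (simp add: G_def c_def)
    next
      case False
      then show ?thesis by (simp add: G_def A_def)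
    qed
    have "K n = (\<Sum>j\<in>I n. \<integral>\<^sup>+p. ennreal (1 - exp (- c n j)) * indicator (A n j) p \<partial>mu)"
      unfolding K_def pw by (rule nn_integral_sum) (use A_sets in measurable)
    also have "\<dots> = (\<Sum>j\<in>I n. ennreal (1 - exp (- c n j)) * emeasure mu (A n j))"
      by (intro sum.cong refl nn_integral_cmult_indicator A_sets)
    also have "\<dots> = (\<Sum>j\<in>I n. ennreal (enn2real (emeasure mu (A n j)) * (1 - exp (- c n j))))"
    proof (intro sum.cong refl)
      fix j
      have "emeasure mu (A n j) = ennreal (enn2real (emeasure mu (A n j)))"
        using A_fin[of n j] by (simp add: less_top)
      moreover have "0 \<le> 1 - exp (- c n j)" by (simp add: c_def)
      ultimately show "ennreal (1 - exp (- c n j)) * emeasure mu (A n j) = ennreal (enn2real (emeasure mu (A n j)) * (1 - exp (- c n j)))"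
        by (metis ennreal_mult' enn2real_nonneg mult.commute)
    qed
    also have "\<dots> = ennreal (V n)"
      unfolding V_def by (rule sum_ennreal) (simp add: c_def enn2real_nonneg)
    finally show ?thesis .
  qed
  have V_nonneg: "0 \<le> V n" for n
    unfolding V_def by (intro sum_nonneg mult_nonneg_nonneg) (simp_all add: c_def enn2real_nonneg)
  have K_lim: "K \<longlonglongrightarrow> (\<integral>\<^sup>+p. ennreal (1 - exp (- g p)) \<partial>mu)"
  proof -
    have incf: "incseq (\<lambda>n p. ennreal (1 - exp (- G n p)))"
      using e_inc unfolding incseq_def le_fun_def by blast
    have "(\<integral>\<^sup>+p. ennreal (1 - exp (- g p)) \<partial>mu) = (\<integral>\<^sup>+p. (SUP n. ennreal (1 - exp (- G n p))) \<partial>mu)"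
      by (simp add: e_SUP)
    also have "\<dots> = (SUP n. K n)"
      unfolding K_def by (rule nn_integral_monotone_convergence_SUP[OF incf]) measurable
    finally have eq: "(\<integral>\<^sup>+p. ennreal (1 - exp (- g p)) \<partial>mu) = (SUP n. K n)" .
    have "incseq K"
      unfolding K_def incseq_def by (auto intro!: nn_integral_mono incseqD[OF e_inc])
    then show ?thesis unfolding eq by (rule LIMSEQ_SUP)
  qed
  have "(\<lambda>n. ee (K n)) \<longlonglongrightarrow> ee (\<integral>\<^sup>+p. ennreal (1 - exp (- g p)) \<partial>mu)"
    by (rule ee_tendsto[OF K_lim])
  moreover have "ee (K n) = (\<integral>\<omega>. exp (- S n \<omega>) \<partial>M)" for n
    by (simp add: K_val ee_ennreal V_nonneg lhs_val)
  ultimately have "(\<lambda>n. \<integral>\<omega>. exp (- S n \<omega>) \<partial>M) \<longlonglongrightarrow> ee (\<integral>\<^sup>+p. ennreal (1 - exp (- g p)) \<partial>mu)"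
    by simp
  from LIMSEQ_unique[OF lhs_lim this] show ?thesis .
qed

lemma prob_space_fading: "prob_space fading_measure"
  unfolding fading_measure_def by (rule prob_space_exponential_density) simp

lemma space_fading[simp]: "space fading_measure = UNIV"
  by (simp add: fading_measure_def)

lemma sets_fading[simp]: "sets fading_measure = sets borel"
  by (simp add: fading_measure_def)

lemma fading_tail:
  assumes t: "0 \<le> t"
  shows "emeasure fading_measure {t<..} = ennreal (exp (- t))"
proof -
  interpret prob_space fading_measure by (rule prob_space_fading)
  have "emeasure fading_measure {..t} = ennreal (erlang_CDF 0 1 t)"
    unfolding fading_measure_def by (rule emeasure_erlang_density) simp
  then have m: "measure fading_measure {..t} = 1 - exp (- t)"
    using t by (simp add: emeasure_eq_measure erlang_CDF_def)
  have "measure fading_measure (space fading_measure - {..t}) = 1 - measure fading_measure {..t}"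
    by (rule prob_compl) simp
  moreover have "space fading_measure - {..t} = {t<..}" by auto
  ultimately have "measure fading_measure {t<..} = exp (- t)" using m by simp
  then show ?thesis by (simp add: emeasure_eq_measure)
qed

lemma fading_int:
  assumes a: "0 \<le> a"
  shows "(\<integral>\<^sup>+h. ennreal (1 - exp (- (a * max 0 h))) \<partial>fading_measure) = ennreal (a / (1 + a))"
proof -
  have "(\<integral>\<^sup>+h. ennreal (1 - exp (- (a * max 0 h))) \<partial>fading_measure)
      = (\<integral>\<^sup>+h. ennreal (exponential_density 1 h) * ennreal (1 - exp (- (a * max 0 h))) \<partial>lborel)"
    unfolding fading_measure_def by (subst nn_integral_density) auto
  also have "\<dots> = (\<integral>\<^sup>+h. ennreal (exp (- h) - exp (- ((1 + a) * h))) * indicator {0..} h \<partial>lborel)"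
  proof (intro nn_integral_cong)
    fix h :: real
    show "ennreal (exponential_density 1 h) * ennreal (1 - exp (- (a * max 0 h)))
        = ennreal (exp (- h) - exp (- ((1 + a) * h))) * indicator {0..} h"
    proof (cases "0 \<le> h")
      case True
      have "exp (- h) * (1 - exp (- (a * h))) = exp (- h) - exp (- ((1 + a) * h))"
        by (simp add: algebra_simps exp_add[symmetric])
      then show ?thesis using True a
        by (simp add: exponential_density_def ennreal_mult[symmetric] max_def)
    next
      case False
      then show ?thesis by (simp add: exponential_density_def)
    qed
  qed
  also have "\<dots> = 0 - (- exp (- 0) + exp (- ((1 + a) * 0)) / (1 + a))"
  proof (rule nn_integral_FTC_atLeast[where F="\<lambda>h. - exp (- h) + exp (- ((1 + a) * h)) / (1 + a)"])
    show "(\<lambda>h. exp (- h) - exp (- ((1 + a) * h))) \<in> borel_measurable borel" by measurable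
    show "((\<lambda>h. - exp (- h) + exp (- ((1 + a) * h)) / (1 + a)) has_real_derivative
           exp (- h) - exp (- ((1 + a) * h))) (at h)" for h
    proof -
      have d: "(- 1 - a) / (1 + a) = - 1" using a by (simp add: field_simps)
      show ?thesis using a apply (auto intro!: derivative_eq_intros)
        by (metis d times_divide_eq_right mult_minus1_right)
    qed
    show "0 \<le> exp (- h) - exp (- ((1 + a) * h))" if "0 \<le> h" for h
      using that a by (simp add: distrib_right mult_nonneg_nonneg)
    show "((\<lambda>h. - exp (- h) + exp (- ((1 + a) * h)) / (1 + a)) \<longlongrightarrow> 0) at_top"
    proof -
      have e1: "((\<lambda>h::real. exp (- h)) \<longlongrightarrow> 0) at_top"
        by (intro filterlim_compose[OF exp_at_bot] filterlim_uminus_at_bot_at_top)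
      have "((\<lambda>h::real. exp ((- (1 + a)) * h)) \<longlongrightarrow> 0) at_top"
        by (intro filterlim_compose[OF exp_at_bot] filterlim_tendsto_neg_mult_at_bot[OF tendsto_const]
            filterlim_ident) (use a in simp)
      then have e2: "((\<lambda>h::real. exp (- ((1 + a) * h))) \<longlongrightarrow> 0) at_top" by (simp add: minus_mult_left)
      have "((\<lambda>h. - exp (- h) + exp (- ((1 + a) * h)) / (1 + a)) \<longlongrightarrow> - 0 + 0 / (1 + a)) at_top"
        by (intro tendsto_intros e1 e2) (use a in simp)
      then show ?thesis by simp
    qed
  qed
  also have "(0::real) - (- exp (- 0) + exp (- ((1 + a) * 0)) / (1 + a)) = a / (1 + a)"
    using a by (simp add: field_simps)
  finally show ?thesis .
qed

lemma mark_pmf_b: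
  assumes "PO \<in> {0..1}" "dB \<in> {0..1}" "dS \<in> {0..1}" "dC \<in> {0..1}"
  shows "(\<integral>\<^sup>+mb. (if snd mb then Q else 0) \<partial>measure_pmf (mark_pmf PO dB dS dC))
       = Q * ennreal ((1 - PO) * dB + (1 - PO) * (1 - dB) * dS + PO * dC)"
proof -
  have e: "(\<integral>\<^sup>+mb. (if snd mb then Q else 0) \<partial>measure_pmf (mark_pmf PO dB dS dC))
     = Q * (ennreal dC * ennreal PO + (ennreal dB + ennreal dS * ennreal (1 - dB)) * ennreal (1 - PO))"
    using assms by (simp add: mark_pmf_def mode_pmf_def tx_pmf_def algebra_simps)
  have f: "ennreal dC * ennreal PO + (ennreal dB + ennreal dS * ennreal (1 - dB)) * ennreal (1 - PO)
     = ennreal (dC * PO + (dB + dS * (1 - dB)) * (1 - PO))"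
    using assms by (simp add: ennreal_mult ennreal_plus)
  have g: "dC * PO + (dB + dS * (1 - dB)) * (1 - PO) = (1 - PO) * dB + (1 - PO) * (1 - dB) * dS + PO * dC"
    by (simp add: algebra_simps)
  show ?thesis by (simp only: e f g)
qed

lemma prob_space_mark: "prob_space (mark_measure PO dB dS dC)"
  unfolding mark_measure_def
  by (intro prob_space_pair prob_space_fading prob_space_measure_pmf)

lemma space_mark[simp]: "space (mark_measure PO dB dS dC) = UNIV"
  by (simp add: mark_measure_def space_pair_measure)

lemma max_mult_nonneg: assumes k: "0 \<le> k" shows "max 0 (k * h) = k * max 0 (h::real)"
proof (cases "0 \<le> h")
  case True then show ?thesis using k by simp
next
  case False
  have "h \<le> 0" using False by simp
  then have "k * h \<le> 0" by (rule mult_nonneg_nonpos[OF k])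
  then show ?thesis using False by simp
qed

lemma b_meas:
  "(\<lambda>p::mpoint. snd (fst (snd p))) \<in> measurable (lborel \<Otimes>\<^sub>M mark_measure PO dB dS dC) (count_space UNIV)"
proof -
  have "(\<lambda>p::mpoint. fst (snd p)) \<in> measurable (lborel \<Otimes>\<^sub>M mark_measure PO dB dS dC) (measure_pmf (mark_pmf PO dB dS dC))"
    unfolding mark_measure_def by (intro measurable_compose[OF measurable_snd measurable_fst])
  then show ?thesis by (rule measurable_compose) simp
qed

lemma b_pred[measurable]: "Measurable.pred (lborel \<Otimes>\<^sub>M mark_measure PO dB dS dC) (\<lambda>p::mpoint. snd (fst (snd p)))"
proof -
  have "{p \<in> space (lborel \<Otimes>\<^sub>M mark_measure PO dB dS dC). snd (fst (snd p))}
      = (\<lambda>p::mpoint. snd (fst (snd p))) -` {True} \<inter> space (lborel \<Otimes>\<^sub>M mark_measure PO dB dS dC)" by auto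
  also have "\<dots> \<in> sets (lborel \<Otimes>\<^sub>M mark_measure PO dB dS dC)"
    by (rule measurable_sets[OF b_meas]) simp
  finally show ?thesis unfolding Measurable.pred_def .
qed

lemma h_meas[measurable]: "(\<lambda>p::mpoint. snd (snd p)) \<in> borel_measurable (lborel \<Otimes>\<^sub>M mark_measure PO dB dS dC)"
proof -
  have "(\<lambda>p::mpoint. snd (snd p)) \<in> measurable (lborel \<Otimes>\<^sub>M mark_measure PO dB dS dC) fading_measure"
    unfolding mark_measure_def by (intro measurable_compose[OF measurable_snd measurable_snd])
  then show ?thesis by (rule measurable_compose) (rule measurable_ident_sets, simp)
qed

lemma x_meas[measurable]: "(\<lambda>p::mpoint. fst p) \<in> borel_measurable (lborel \<Otimes>\<^sub>M mark_measure PO dB dS dC)"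
  by (rule measurable_compose[OF measurable_fst]) (rule measurable_ident_sets, simp)

lemma g_meas:
  "(\<lambda>p::mpoint. if snd (fst (snd p)) then c0 * max 0 (xi * snd (snd p) * norm (fst p) powr (- alpha)) else 0)
     \<in> borel_measurable (lborel \<Otimes>\<^sub>M mark_measure PO dB dS dC)"
proof -
  have gen: "(\<lambda>p. c0 * max 0 (xi * hh p * norm (xx p) powr (- alpha))) \<in> borel_measurable N"
    if [measurable]: "hh \<in> borel_measurable N" "xx \<in> borel_measurable N"
    for N :: "'q measure" and hh :: "'q \<Rightarrow> real" and xx :: "'q \<Rightarrow> real \<times> real"
    by measurable
  show ?thesis
    by (rule measurable_If) (rule gen[OF h_meas x_meas], simp, use b_pred in \<open>simp add: Measurable.pred_def\<close>)
qed

lemma K_value: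
  fixes lam PO dB dS dC xi alpha r0 gamma c0 :: real
  assumes lam: "lam > 0" and r0: "r0 > 0" and xi: "xi > 0" and ga: "gamma > 0"
    and P01: "PO \<in> {0..1}" "dB \<in> {0..1}" "dS \<in> {0..1}" "dC \<in> {0..1}"
    and c0: "c0 = gamma / (xi * r0 powr (- alpha))"
  shows "(\<integral>\<^sup>+p. ennreal (1 - exp (- (if snd (fst (snd p)) then c0 * max 0 (xi * snd (snd p) * norm (fst p) powr (- alpha)) else 0))) \<partial>intensity lam PO dB dS dC)
     = ennreal (2 * pi * lam_eff lam PO dB dS dC) * (\<integral>\<^sup>+ r. ennreal (gamma * r powr (- alpha) / (r0 powr (- alpha) + gamma * r powr (- alpha)) * r) * indicator {0<..} r \<partial>lborel)"
    (is "?L = _")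
proof -
  define mk where "mk = mark_measure PO dB dS dC"
  define gg where "gg p = (if snd (fst (snd p)) then c0 * max 0 (xi * snd (snd p) * norm (fst p) powr (- alpha)) else 0)" for p :: mpoint
  define F where "F p = ennreal (1 - exp (- gg p))" for p
  define pb where "pb = (1 - PO) * dB + (1 - PO) * (1 - dB) * dS + PO * dC"
  define R where "R = r0 powr (- alpha)"
  define a where "a x = c0 * xi * norm x powr (- alpha)" for x :: "real \<times> real"
  define q where "q r = c0 * xi * r powr (- alpha) / (1 + c0 * xi * r powr (- alpha))" for r :: real
  define phi where "phi r = gamma * r powr (- alpha) / (R + gamma * r powr (- alpha))" for r :: real
  have Rpos: "0 < R" unfolding R_def using r0 by simp
  have cx: "c0 * xi = gamma / R" unfolding c0 R_def using xi by simp
  have c0pos: "0 < c0" unfolding c0 using xi ga r0 by simp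
  have a_nonneg: "0 \<le> a x" for x unfolding a_def using c0pos xi by simp
  interpret mk: prob_space mk unfolding mk_def by (rule prob_space_mark)
  interpret fad: prob_space fading_measure by (rule prob_space_fading)
  have pbnn: "0 \<le> pb" using P01 unfolding pb_def by (auto intro!: add_nonneg_nonneg mult_nonneg_nonneg)
  have gg_meas: "gg \<in> borel_measurable (lborel \<Otimes>\<^sub>M mk)"
    unfolding gg_def mk_def by (rule g_meas)
  have F_meas[measurable]: "F \<in> borel_measurable (lborel \<Otimes>\<^sub>M mk)"
    unfolding F_def by (rule measurable_compose[OF gg_meas]) measurable
  have "?L = (\<integral>\<^sup>+p. F p \<partial>density (lborel \<Otimes>\<^sub>M mk) (\<lambda>_. ennreal lam))"
    unfolding F_def gg_def mk_def intensity_def ..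
  also have "\<dots> = (\<integral>\<^sup>+p. ennreal lam * F p \<partial>(lborel \<Otimes>\<^sub>M mk))"
    by (rule nn_integral_density) simp_all
  also have "\<dots> = ennreal lam * (\<integral>\<^sup>+p. F p \<partial>(lborel \<Otimes>\<^sub>M mk))"
    by (rule nn_integral_cmult) simp
  also have "(\<integral>\<^sup>+p. F p \<partial>(lborel \<Otimes>\<^sub>M mk)) = (\<integral>\<^sup>+x. \<integral>\<^sup>+y. F (x, y) \<partial>mk \<partial>lborel)"
    by (rule mk.nn_integral_fst[symmetric]) simp
  also have "\<dots> = (\<integral>\<^sup>+x. ennreal (a x / (1 + a x)) * ennreal pb \<partial>lborel)"
  proof (intro nn_integral_cong)
    fix x :: "real \<times> real"
    have Fx: "(\<lambda>y. F (x, y)) \<in> borel_measurable (measure_pmf (mark_pmf PO dB dS dC) \<Otimes>\<^sub>M fading_measure)"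
      using measurable_Pair2[OF F_meas, of x] unfolding mk_def mark_measure_def by simp
    have "(\<integral>\<^sup>+y. F (x, y) \<partial>mk) = (\<integral>\<^sup>+mb. \<integral>\<^sup>+h. F (x, (mb, h)) \<partial>fading_measure \<partial>measure_pmf (mark_pmf PO dB dS dC))"
      unfolding mk_def mark_measure_def using fad.nn_integral_fst[OF Fx] by simp
    also have "\<dots> = (\<integral>\<^sup>+mb. (if snd mb then ennreal (a x / (1 + a x)) else 0) \<partial>measure_pmf (mark_pmf PO dB dS dC))"
    proof (intro nn_integral_cong)
      fix mb :: "access_mode \<times> bool"
      show "(\<integral>\<^sup>+h. F (x, (mb, h)) \<partial>fading_measure) = (if snd mb then ennreal (a x / (1 + a x)) else 0)"
      proof (cases "snd mb")
        case True
        have "F (x, (mb, h)) = ennreal (1 - exp (- (a x * max 0 h)))" for h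
        proof -
          have "max 0 (xi * h * norm x powr (- alpha)) = (xi * norm x powr (- alpha)) * max 0 h"
            using xi by (subst max_mult_nonneg[symmetric]) (simp_all add: ac_simps)
          then show ?thesis using True by (simp add: F_def gg_def a_def ac_simps)
        qed
        then show ?thesis using True fading_int[OF a_nonneg[of x]] by simp
      next
        case False
        then show ?thesis by (simp add: F_def gg_def)
      qed
    qed
    also have "\<dots> = ennreal (a x / (1 + a x)) * ennreal pb"
      unfolding pb_def by (rule mark_pmf_b[OF P01])
    finally show "(\<integral>\<^sup>+y. F (x, y) \<partial>mk) = ennreal (a x / (1 + a x)) * ennreal pb" .
  qed
  also have "\<dots> = (\<integral>\<^sup>+x. ennreal (a x / (1 + a x)) \<partial>lborel) * ennreal pb"
    by (rule nn_integral_multc) (simp add: a_def)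
  also have "(\<integral>\<^sup>+x. ennreal (a x / (1 + a x)) \<partial>lborel) = (\<integral>\<^sup>+x. ennreal (q (norm (x::real\<times>real))) \<partial>lborel)"
    by (simp add: a_def q_def)
  also have "\<dots> = (\<integral>\<^sup>+r. ennreal (q r) \<partial>distr (lborel :: (real\<times>real) measure) borel norm)"
    by (rule nn_integral_distr[symmetric]) (simp_all add: q_def)
  also have "\<dots> = (\<integral>\<^sup>+r. ennreal (q r) \<partial>density lborel (\<lambda>r. ennreal (2*pi*r) * indicator {0<..} r))"
    by (simp only: polar_distr)
  also have "\<dots> = (\<integral>\<^sup>+r. ennreal (2*pi*r) * indicator {0<..} r * ennreal (q r) \<partial>lborel)"
    by (rule nn_integral_density) (simp_all add: q_def)
  also have "\<dots> = (\<integral>\<^sup>+r. ennreal (2*pi) * (ennreal (phi r * r) * indicator {0<..} r) \<partial>lborel)"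
  proof (intro nn_integral_cong)
    fix r :: real
    show "ennreal (2*pi*r) * indicator {0<..} r * ennreal (q r) = ennreal (2*pi) * (ennreal (phi r * r) * indicator {0<..} r)"
    proof (cases "0 < r")
      case True
      have t: "0 \<le> r powr (- alpha)" by simp
      have "q r = phi r"
        unfolding q_def phi_def cx using Rpos ga t
        by (simp add: field_simps add_pos_nonneg)
      moreover have "0 \<le> phi r" unfolding phi_def using Rpos ga t by simp
      ultimately show ?thesis using True
        by (simp add: ennreal_mult[symmetric] ac_simps)
    next
      case False
      then show ?thesis by simp
    qed
  qed
  also have "\<dots> = ennreal (2*pi) * (\<integral>\<^sup>+r. ennreal (phi r * r) * indicator {0<..} r \<partial>lborel)"
    by (rule nn_integral_cmult) (simp add: phi_def)
  finally have L: "?L = ennreal lam * (ennreal (2*pi) * (\<integral>\<^sup>+r. ennreal (phi r * r) * indicator {0<..} r \<partial>lborel) * ennreal pb)" .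
  have le: "lam_eff lam PO dB dS dC = lam * pb"
    unfolding lam_eff_def lamB_def lamS_def lamC_def pb_def by (simp add: algebra_simps)
  have "ennreal (2 * pi * lam_eff lam PO dB dS dC) = ennreal lam * ennreal (2*pi) * ennreal pb"
    unfolding le using lam pbnn by (simp add: ennreal_mult[symmetric] ac_simps)
  then show ?thesis unfolding L phi_def R_def by (simp add: ac_simps)
qed

lemma pred_gen:
  fixes N :: "'q measure" and B :: "'q \<Rightarrow> bool" and hh :: "'q \<Rightarrow> real" and II :: "'q \<Rightarrow> ennreal"
  assumes [measurable]: "Measurable.pred N B" "Measurable.pred N Q" "hh \<in> borel_measurable N" "II \<in> borel_measurable N"
  shows "{w \<in> space N. B w \<and> Q w \<and> ennreal (xi * hh w * R) > ennreal gamma * (ennreal No + II w)} \<in> sets N"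
  by measurable

lemma pred_of_meas:
  assumes "f \<in> measurable N (count_space UNIV)"
  shows "Measurable.pred N (\<lambda>w. f w = c)"
proof -
  have "{w \<in> space N. f w = c} = f -` {c} \<inter> space N" by auto
  also have "\<dots> \<in> sets N" by (rule measurable_sets[OF assms]) simp
  finally show ?thesis unfolding Measurable.pred_def .
qed

lemma interference_Ssum:
  assumes c0: "0 \<le> c0"
  shows "ennreal c0 * interference xi alpha S
    = Ssum (\<lambda>p::mpoint. ennreal (if snd (fst (snd p)) then c0 * max 0 (xi * snd (snd p) * norm (fst p) powr (- alpha)) else 0)) S"
proof -
  have "interference xi alpha S = Ssum (\<lambda>p. case p of (x, ((m, b), h)) \<Rightarrow> if b then ennreal (xi * h * norm x powr (- alpha)) else 0) S"
    unfolding interference_def Ssum_def ..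
  then have "ennreal c0 * interference xi alpha S = Ssum (\<lambda>p. ennreal c0 * (case p of (x, ((m, b), h)) \<Rightarrow> if b then ennreal (xi * h * norm x powr (- alpha)) else 0)) S"
    by (simp add: Ssum_cmult)
  also have "(\<lambda>p. ennreal c0 * (case p of (x, ((m, b), h)) \<Rightarrow> if b then ennreal (xi * h * norm x powr (- alpha)) else 0))
      = (\<lambda>p::mpoint. ennreal (if snd (fst (snd p)) then c0 * max 0 (xi * snd (snd p) * norm (fst p) powr (- alpha)) else 0))"
  proof (rule ext)
    fix p :: mpoint
    obtain x m b h where p: "p = (x, ((m, b), h))" by (cases p) auto
    have "ennreal c0 * ennreal v = ennreal (c0 * max 0 v)" for v :: real
    proof (cases "0 \<le> v")
      case True then show ?thesis using c0 by (simp add: ennreal_mult)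
    next
      case False then show ?thesis by (simp add: ennreal_neg)
    qed
    then show "ennreal c0 * (case p of (x, ((m, b), h)) \<Rightarrow> if b then ennreal (xi * h * norm x powr (- alpha)) else 0)
      = ennreal (if snd (fst (snd p)) then c0 * max 0 (xi * snd (snd p) * norm (fst p) powr (- alpha)) else 0)"
      unfolding p by simp
  qed
  finally show ?thesis .
qed

theorem lemma1:
  fixes M :: "'w measure" and P :: "'w \<Rightarrow> mpoint set"
    and lam PO dB dS dC xi No alpha r0 gamma :: real and phi :: access_mode
  assumes "lam > 0" and "r0 > 0" and "xi > 0" and "No \<ge> 0" and "alpha > 0" and "gamma > 0"
    and "PO \<in> {0..1}" and "dB \<in> {0..1}" and "dS \<in> {0..1}" and "dC \<in> {0..1}"
    and "poisson_process M (intensity lam PO dB dS dC) P"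
    and "(\<lambda>\<omega>. interference xi alpha (P \<omega>)) \<in> borel_measurable M"
    and "measure (M \<Otimes>\<^sub>M mark_measure PO dB dS dC)
           {w \<in> space (M \<Otimes>\<^sub>M mark_measure PO dB dS dC).
              snd (fst (snd w)) \<and> fst (fst (snd w)) = phi} \<noteq> 0"
  shows "measure (M \<Otimes>\<^sub>M mark_measure PO dB dS dC)
           {w \<in> space (M \<Otimes>\<^sub>M mark_measure PO dB dS dC).
              snd (fst (snd w)) \<and> fst (fst (snd w)) = phi \<and>
              ennreal (xi * snd (snd w) * r0 powr (- alpha))
                > ennreal gamma * (ennreal No + interference xi alpha (P (fst w)))}
         / measure (M \<Otimes>\<^sub>M mark_measure PO dB dS dC)
           {w \<in> space (M \<Otimes>\<^sub>M mark_measure PO dB dS dC).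
              snd (fst (snd w)) \<and> fst (fst (snd w)) = phi}
       = exp (- (gamma * No) / (xi * r0 powr (- alpha))) *
         (let J = ennreal (2 * pi * lam_eff lam PO dB dS dC) *
                  (\<integral>\<^sup>+ r. ennreal (gamma * r powr (- alpha) / (r0 powr (- alpha) + gamma * r powr (- alpha)) * r)
                          * indicator {0<..} r \<partial>lborel)
          in if J = \<infinity> then 0 else exp (- enn2real J))"
proof -
  note lam = assms(1) and r0 = assms(2) and xi = assms(3) and No = assms(4) and ga = assms(6)
  note P01 = assms(7) assms(8) assms(9) assms(10)
  note pp = assms(11) and Imeas = assms(12) and nz = assms(13)
  define Mk where "Mk = mark_measure PO dB dS dC"
  define pm where "pm = measure_pmf (mark_pmf PO dB dS dC)"
  define c0 where "c0 = gamma / (xi * r0 powr (- alpha))"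
  define Itf where "Itf \<omega> = interference xi alpha (P \<omega>)" for \<omega>
  define Dm where "Dm = {mb :: access_mode \<times> bool. snd mb \<and> fst mb = phi}"
  define qD where "qD = measure pm Dm"
  define g where "g p = (if snd (fst (snd p)) then c0 * max 0 (xi * snd (snd p) * norm (fst p) powr (- alpha)) else 0)" for p :: mpoint
  define J where "J = ennreal (2 * pi * lam_eff lam PO dB dS dC) *
                  (\<integral>\<^sup>+ r. ennreal (gamma * r powr (- alpha) / (r0 powr (- alpha) + gamma * r powr (- alpha)) * r)
                          * indicator {0<..} r \<partial>lborel)"
  define E where "E = {w \<in> space (M \<Otimes>\<^sub>M Mk). snd (fst (snd w)) \<and> fst (fst (snd w)) = phi \<and>
              ennreal (xi * snd (snd w) * r0 powr (- alpha)) > ennreal gamma * (ennreal No + Itf (fst w))}"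
  define D where "D = {w \<in> space (M \<Otimes>\<^sub>M Mk). snd (fst (snd w)) \<and> fst (fst (snd w)) = phi}"
  have E_eq: "{w \<in> space (M \<Otimes>\<^sub>M mark_measure PO dB dS dC).
              snd (fst (snd w)) \<and> fst (fst (snd w)) = phi \<and>
              ennreal (xi * snd (snd w) * r0 powr (- alpha))
                > ennreal gamma * (ennreal No + interference xi alpha (P (fst w)))} = E" unfolding E_def Mk_def Itf_def ..
  have D_eq: "{w \<in> space (M \<Otimes>\<^sub>M mark_measure PO dB dS dC).
              snd (fst (snd w)) \<and> fst (fst (snd w)) = phi} = D" unfolding D_def Mk_def ..
  have M: "prob_space M" using pp unfolding poisson_process_def by (rule conjunct1)
  interpret M: prob_space M by (rule M)
  interpret Mk: prob_space Mk unfolding Mk_def by (rule prob_space_mark)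
  interpret fad: prob_space fading_measure by (rule prob_space_fading)
  interpret pm: prob_space pm unfolding pm_def by (rule prob_space_measure_pmf)
  have Mk_eq: "Mk = pm \<Otimes>\<^sub>M fading_measure" unfolding Mk_def pm_def mark_measure_def ..
  have space_Mk: "space Mk = UNIV" unfolding Mk_def by simp
  have Rpos: "0 < r0 powr (- alpha)" using r0 by simp
  have c0pos: "0 < c0" unfolding c0_def using xi ga Rpos by simp
  have Itf_meas[measurable]: "Itf \<in> borel_measurable M" unfolding Itf_def[abs_def] by (rule Imeas)
  have ee_meas[measurable]: "(\<lambda>\<omega>. ee (ennreal c0 * Itf \<omega>)) \<in> borel_measurable M"
    by (rule measurable_compose[OF _ borel_measurable_ee]) measurable
  have L: "(\<integral>\<omega>. ee (ennreal c0 * Itf \<omega>) \<partial>M) = ee J"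
  proof -
    define B where "B n = cball (0::real\<times>real) (real n) \<times> (UNIV :: ((access_mode \<times> bool) \<times> real) set)" for n :: nat
    have sets_int: "sets (intensity lam PO dB dS dC) = sets (lborel \<Otimes>\<^sub>M Mk)"
      by (simp add: intensity_def Mk_def)
    have g_meas': "g \<in> borel_measurable (intensity lam PO dB dS dC)"
      unfolding measurable_cong_sets[OF sets_int refl] g_def Mk_def by (rule g_meas)
    have B_sets': "B n \<in> sets (lborel \<Otimes>\<^sub>M Mk)" for n
      unfolding B_def by (rule pair_measureI) (auto simp: borel_closed space_Mk intro: sets.top[of Mk, unfolded space_Mk])
    have B_sets: "B n \<in> sets (intensity lam PO dB dS dC)" for n
      unfolding sets_int by (rule B_sets')
    have B_fin: "emeasure (intensity lam PO dB dS dC) (B n) < \<infinity>" for n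
    proof -
      have "emeasure (intensity lam PO dB dS dC) (B n) = (\<integral>\<^sup>+p. ennreal lam * indicator (B n) p \<partial>(lborel \<Otimes>\<^sub>M Mk))"
        unfolding intensity_def Mk_def[symmetric] by (rule emeasure_density) (simp, rule B_sets')
      also have "\<dots> = ennreal lam * emeasure (lborel \<Otimes>\<^sub>M Mk) (B n)"
        by (rule nn_integral_cmult_indicator[OF B_sets'])
      also have "emeasure (lborel \<Otimes>\<^sub>M Mk) (B n) = emeasure lborel (cball (0::real\<times>real) (real n)) * emeasure Mk UNIV"
        unfolding B_def by (rule Mk.emeasure_pair_measure_Times) (auto simp: borel_closed intro: sets.top[of Mk, unfolded space_Mk])
      also have "\<dots> = ennreal (unit_ball_vol (real DIM(real\<times>real)) * real n ^ DIM(real\<times>real))"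
        using Mk.emeasure_space_1 by (simp add: emeasure_cball space_Mk)
      finally show ?thesis by (simp add: ennreal_mult_eq_top_iff less_top[symmetric])
    qed
    have B_inc: "incseq B"
      unfolding B_def incseq_def by (auto simp: subset_cball)
    have B_cov: "\<exists>n. p \<in> B n" for p
    proof -
      obtain n :: nat where "norm (fst p) \<le> real n" using real_arch_simple by blast
      then have "p \<in> B n" by (cases p) (auto simp: B_def)
      then show ?thesis ..
    qed
    have Ssum_eq: "Ssum (\<lambda>p. ennreal (g p)) (P \<omega>) = ennreal c0 * Itf \<omega>" for \<omega>
      unfolding Itf_def g_def by (rule interference_Ssum[symmetric]) (use c0pos in simp)
    have meas: "(\<lambda>\<omega>. Ssum (\<lambda>p. ennreal (g p)) (P \<omega>)) \<in> borel_measurable M"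
      unfolding Ssum_eq by measurable
    have gnn: "0 \<le> g p" for p unfolding g_def using c0pos by simp
    have "(\<integral>\<omega>. ee (Ssum (\<lambda>p. ennreal (g p)) (P \<omega>)) \<partial>M) = ee (\<integral>\<^sup>+p. ennreal (1 - exp (- g p)) \<partial>intensity lam PO dB dS dC)"
      by (rule pp_laplace[OF pp g_meas' gnn B_sets B_fin B_inc B_cov meas])
    also have "(\<integral>\<^sup>+p. ennreal (1 - exp (- g p)) \<partial>intensity lam PO dB dS dC) = J"
      unfolding g_def J_def by (rule K_value[OF lam r0 xi ga P01 c0_def])
    finally show ?thesis unfolding Ssum_eq .
  qed
  have ee_int: "integrable M (\<lambda>\<omega>. ee (ennreal c0 * Itf \<omega>))"
    by (rule M.integrable_const_bound[where B=1]) (auto simp: ee_nonneg ee_le1)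
  have fs: "(\<lambda>w. fst (snd w)) \<in> measurable (M \<Otimes>\<^sub>M Mk) pm"
    unfolding Mk_eq by (intro measurable_compose[OF measurable_snd measurable_fst])
  have bm: "(\<lambda>w. snd (fst (snd w))) \<in> measurable (M \<Otimes>\<^sub>M Mk) (count_space UNIV)"
    by (rule measurable_compose[OF fs]) (simp add: pm_def)
  have mm: "(\<lambda>w. fst (fst (snd w))) \<in> measurable (M \<Otimes>\<^sub>M Mk) (count_space UNIV)"
    by (rule measurable_compose[OF fs]) (simp add: pm_def)
  have hm: "(\<lambda>w. snd (snd w)) \<in> borel_measurable (M \<Otimes>\<^sub>M Mk)"
  proof -
    have "(\<lambda>w. snd (snd w)) \<in> measurable (M \<Otimes>\<^sub>M Mk) fading_measure"
      unfolding Mk_eq by (intro measurable_compose[OF measurable_snd measurable_snd])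
    then show ?thesis by (rule measurable_compose) (rule measurable_ident_sets, simp)
  qed
  have Im: "(\<lambda>w. Itf (fst w)) \<in> borel_measurable (M \<Otimes>\<^sub>M Mk)"
    by (rule measurable_compose[OF measurable_fst Itf_meas])
  have bp: "Measurable.pred (M \<Otimes>\<^sub>M Mk) (\<lambda>w. snd (fst (snd w)))"
    using pred_of_meas[OF bm, of True] by simp
  have mp: "Measurable.pred (M \<Otimes>\<^sub>M Mk) (\<lambda>w. fst (fst (snd w)) = phi)"
    by (rule pred_of_meas[OF mm])
  have E_sets: "E \<in> sets (M \<Otimes>\<^sub>M Mk)"
    unfolding E_def by (rule pred_gen[OF bp mp hm Im])
  have D_sets: "D \<in> sets (M \<Otimes>\<^sub>M Mk)"
    unfolding D_def using bp mp by measurable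
  have qD_nn: "0 \<le> qD" unfolding qD_def by simp
  have em_pm: "emeasure pm Dm = ennreal qD"
    unfolding qD_def by (rule pm.emeasure_eq_measure)
  have emE: "emeasure Mk (Pair \<omega> -` E) = ennreal (qD * exp (- (c0 * No)) * ee (ennreal c0 * Itf \<omega>))"
    if \<omega>: "\<omega> \<in> space M" for \<omega>
  proof (cases "Itf \<omega> = \<infinity>")
    case True
    have inf: "ennreal gamma * (ennreal No + Itf \<omega>) = \<infinity>" using True ga by simp
    have "Pair \<omega> -` E = {}"
    proof (intro equals0I)
      fix y assume "y \<in> Pair \<omega> -` E"
      then have "ennreal gamma * (ennreal No + Itf \<omega>) < ennreal (xi * snd y * r0 powr (- alpha))"
        unfolding E_def by simp
      then show False unfolding inf by simp
    qed
    moreover have "ee (ennreal c0 * Itf \<omega>) = 0" using True c0pos by (simp add: ee_def)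
    ultimately show ?thesis by simp
  next
    case False
    define i where "i = enn2real (Itf \<omega>)"
    have Ii: "Itf \<omega> = ennreal i" unfolding i_def using False by (simp add: less_top)
    have i0: "0 \<le> i" unfolding i_def by simp
    define t where "t = c0 * (No + i)"
    have t0: "0 \<le> t" unfolding t_def using c0pos No i0 by simp
    have key: "ennreal gamma * (ennreal No + Itf \<omega>) < ennreal (xi * hh * r0 powr (- alpha)) \<longleftrightarrow> t < hh" for hh
    proof -
      have "ennreal gamma * (ennreal No + Itf \<omega>) = ennreal (gamma * (No + i))"
        unfolding Ii using ga No i0 by (simp add: ennreal_plus ennreal_mult)
      moreover have "ennreal (gamma * (No + i)) < ennreal (xi * hh * r0 powr (- alpha)) \<longleftrightarrow> gamma * (No + i) < xi * hh * r0 powr (- alpha)"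
        using ga No i0 by (intro ennreal_less_iff) simp
      moreover have "gamma * (No + i) < xi * hh * r0 powr (- alpha) \<longleftrightarrow> t < hh"
      proof -
        have "t = gamma * (No + i) / (xi * r0 powr (- alpha))" unfolding t_def c0_def by simp
        moreover have "0 < xi * r0 powr (- alpha)" using xi Rpos by simp
        ultimately show ?thesis by (simp add: pos_divide_less_eq ac_simps)
      qed
      ultimately show ?thesis by simp
    qed
    have sl: "Pair \<omega> -` E = Dm \<times> {t<..}"
    proof (intro set_eqI)
      fix y :: "(access_mode \<times> bool) \<times> real"
      have "(\<omega>, y) \<in> space (M \<Otimes>\<^sub>M Mk)" using \<omega> by (simp add: space_pair_measure space_Mk)
      then show "y \<in> Pair \<omega> -` E \<longleftrightarrow> y \<in> Dm \<times> {t<..}"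
        unfolding E_def Dm_def by (simp add: key) (auto simp: mem_Times_iff)
    qed
    have "emeasure Mk (Pair \<omega> -` E) = emeasure pm Dm * emeasure fading_measure {t<..}"
      unfolding sl Mk_eq by (rule fad.emeasure_pair_measure_Times) (simp_all add: pm_def)
    also have "\<dots> = ennreal qD * ennreal (exp (- t))" by (simp only: em_pm fading_tail[OF t0])
    also have "\<dots> = ennreal (qD * exp (- t))" using qD_nn by (rule ennreal_mult[symmetric]) simp
    also have "exp (- t) = exp (- (c0 * No)) * exp (- (c0 * i))"
      unfolding t_def by (simp add: exp_add[symmetric] distrib_left)
    also have "exp (- (c0 * i)) = ee (ennreal c0 * Itf \<omega>)"
    proof -
      have "ennreal c0 * Itf \<omega> = ennreal (c0 * i)" unfolding Ii using c0pos i0 by (simp add: ennreal_mult)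
      then show ?thesis using c0pos i0 by (simp add: ee_ennreal)
    qed
    finally show ?thesis by (simp only: mult.assoc)
  qed
  have emD: "emeasure Mk (Pair \<omega> -` D) = ennreal qD" if \<omega>: "\<omega> \<in> space M" for \<omega>
  proof -
    have sl: "Pair \<omega> -` D = Dm \<times> space fading_measure"
    proof (intro set_eqI)
      fix y :: "(access_mode \<times> bool) \<times> real"
      have "(\<omega>, y) \<in> space (M \<Otimes>\<^sub>M Mk)" using \<omega> by (simp add: space_pair_measure space_Mk)
      then show "y \<in> Pair \<omega> -` D \<longleftrightarrow> y \<in> Dm \<times> space fading_measure"
        unfolding D_def Dm_def by (auto simp: mem_Times_iff)
    qed
    have "emeasure Mk (Pair \<omega> -` D) = emeasure pm Dm * emeasure fading_measure (space fading_measure)"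
      unfolding sl Mk_eq by (rule fad.emeasure_pair_measure_Times) (simp_all add: pm_def)
    then show ?thesis by (simp only: em_pm fad.emeasure_space_1 mult_1_right)
  qed
  have "emeasure (M \<Otimes>\<^sub>M Mk) E = (\<integral>\<^sup>+\<omega>. emeasure Mk (Pair \<omega> -` E) \<partial>M)"
    by (rule Mk.emeasure_pair_measure_alt[OF E_sets])
  also have "\<dots> = (\<integral>\<^sup>+\<omega>. ennreal (qD * exp (- (c0 * No))) * ennreal (ee (ennreal c0 * Itf \<omega>)) \<partial>M)"
    by (intro nn_integral_cong) (simp add: emE qD_nn ee_nonneg ennreal_mult[symmetric])
  also have "\<dots> = ennreal (qD * exp (- (c0 * No))) * (\<integral>\<^sup>+\<omega>. ennreal (ee (ennreal c0 * Itf \<omega>)) \<partial>M)"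
    by (rule nn_integral_cmult) measurable
  also have "(\<integral>\<^sup>+\<omega>. ennreal (ee (ennreal c0 * Itf \<omega>)) \<partial>M) = ennreal (\<integral>\<omega>. ee (ennreal c0 * Itf \<omega>) \<partial>M)"
    by (rule nn_integral_eq_integral[OF ee_int]) (simp add: ee_nonneg)
  finally have emE_tot: "emeasure (M \<Otimes>\<^sub>M Mk) E = ennreal (qD * exp (- (c0 * No)) * ee J)"
    unfolding L using qD_nn by (simp add: ennreal_mult[symmetric] ee_nonneg)
  have "emeasure (M \<Otimes>\<^sub>M Mk) D = (\<integral>\<^sup>+\<omega>. emeasure Mk (Pair \<omega> -` D) \<partial>M)"
    by (rule Mk.emeasure_pair_measure_alt[OF D_sets])
  also have "\<dots> = (\<integral>\<^sup>+\<omega>. ennreal qD \<partial>M)"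
    by (intro nn_integral_cong) (simp add: emD)
  also have "\<dots> = ennreal qD" by (simp add: M.emeasure_space_1)
  finally have emD_tot: "emeasure (M \<Otimes>\<^sub>M Mk) D = ennreal qD" .
  have mE: "measure (M \<Otimes>\<^sub>M Mk) E = qD * exp (- (c0 * No)) * ee J"
    unfolding measure_def emE_tot using qD_nn by (simp add: ee_nonneg)
  have mD: "measure (M \<Otimes>\<^sub>M Mk) D = qD"
    unfolding measure_def emD_tot using qD_nn by simp
  have mD': "measure (M \<Otimes>\<^sub>M mark_measure PO dB dS dC) {w \<in> space (M \<Otimes>\<^sub>M mark_measure PO dB dS dC).
              snd (fst (snd w)) \<and> fst (fst (snd w)) = phi} = qD"
    using mD unfolding D_eq Mk_def .
  have mE': "measure (M \<Otimes>\<^sub>M mark_measure PO dB dS dC) {w \<in> space (M \<Otimes>\<^sub>M mark_measure PO dB dS dC).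
              snd (fst (snd w)) \<and> fst (fst (snd w)) = phi \<and>
              ennreal (xi * snd (snd w) * r0 powr (- alpha))
                > ennreal gamma * (ennreal No + interference xi alpha (P (fst w)))} = qD * exp (- (c0 * No)) * ee J"
    using mE unfolding E_eq Mk_def .
  have qD0: "qD \<noteq> 0" using nz unfolding mD' .
  have rhs: "exp (- (gamma * No) / (xi * r0 powr (- alpha))) * (let J' = ennreal (2 * pi * lam_eff lam PO dB dS dC) *
                  (\<integral>\<^sup>+ r. ennreal (gamma * r powr (- alpha) / (r0 powr (- alpha) + gamma * r powr (- alpha)) * r)
                          * indicator {0<..} r \<partial>lborel) in if J' = \<infinity> then 0 else exp (- enn2real J'))
      = exp (- (c0 * No)) * ee J"
    unfolding J_def[symmetric] by (simp add: Let_def ee_def c0_def)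
  show ?thesis
    unfolding mE' mD' rhs using qD0 by simp
qed

end
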